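(* Let $p_1,p_2$ be non-negative integers with $p_1+p_2$ odd. Then $$\sum_{j_1=0}^{p_1}\sum_{j_2=0}^{p_2}\binom{p_1}{j_1}\binom{p_2}{j_2}(-1)^{j_1+j_2}B_{p_1-j_1}B_{p_2-j_2}B_{j_1+j_2}=0,$$ where $B_j$ are the Bernoulli numbers.
   Context: The Bernoulli numbers $B_j$ are defined by $\frac{t}{e^t-1}=\sum_{j\ge0}B_j\frac{t^j}{j!}$ (so $B_1=-1/2$). *)

theory Defs
  imports "HOL-Computational_Algebra.Formal_Power_Series"
begin

definition bernoulli :: "nat \<Rightarrow> rat" where
  "bernoulli j = fact j * fps_nth (fps_X / (fps_exp 1 - 1)) j"

end

theory Submission imports Defs begin
unbundle fps_syntax

definition bf :: "rat fps" where "bf = fps_X / (fps_exp 1 - 1)"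
abbreviation E :: "rat fps" where "E \<equiv> fps_exp 1"

lemma bf_nth: "bf $ n = bernoulli n / fact n"
  by (simp add: bernoulli_def bf_def)

lemma Em1_nz: "E - 1 \<noteq> 0"
proof
  assume "E - 1 = 0" hence "(E - 1) $ 1 = 0" by simp
  thus False by simp
qed

lemma subdeg_Em1: "subdegree (E - 1) = 1"
  by (rule subdegreeI) auto

lemma L1: "bf * (E - 1) = fps_X"
proof -
  have "subdegree (E - 1) \<le> subdegree (fps_X :: rat fps)" using subdeg_Em1 by simp
  hence "(E - 1) dvd fps_X" using fps_dvd_iff[OF Em1_nz, of fps_X] by simp
  thus ?thesis unfolding bf_def by simp
qed

lemma L2: "(\<Sum>s=0..N. of_nat (N choose s) * bernoulli s) - bernoulli N = (if N = 1 then 1 else 0)"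
proof -
  have "(bf * (E - 1)) $ N = fps_X $ N" by (simp add: L1)
  hence "(\<Sum>s=0..N. bf$s * (E - 1)$(N - s)) = (if N = 1 then 1 else 0)"
    by (simp add: fps_mult_nth)
  moreover have "(\<Sum>s=0..N. bf$s * (E - 1)$(N - s)) = (\<Sum>s=0..N. bf$s / fact (N - s)) - bf $ N"
  proof -
    have "(\<Sum>s=0..N. bf$s * (E - 1)$(N - s)) = (\<Sum>s=0..N. bf$s / fact (N - s) - (if s = N then bf $ N else 0))"
      by (intro sum.cong) (auto simp: divide_inverse)
    thus ?thesis by (simp add: sum_subtractf)
  qed
  ultimately have h: "(\<Sum>s=0..N. bf$s / fact (N - s)) - bf $ N = (if N = 1 then 1 else 0)" by simp
  have "(\<Sum>s=0..N. of_nat (N choose s) * bernoulli s) = fact N * (\<Sum>s=0..N. bf$s / fact (N - s))"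
    unfolding sum_distrib_left
  proof (intro sum.cong refl)
    fix s assume "s \<in> {0..N}" hence s: "s \<le> N" by simp
    show "of_nat (N choose s) * bernoulli s = fact N * (bf $ s / fact (N - s))"
      using s by (simp add: bf_nth binomial_fact field_simps)
  qed
  moreover have "bernoulli N = fact N * bf $ N" by (simp add: bf_nth)
  ultimately show ?thesis using h
    by (metis (no_types, lifting) fact_1 mult.right_neutral mult_zero_right right_diff_distrib' of_nat_1)
qed

definition hh :: "rat fps" where "hh = fps_const (-1) * fps_X"

lemma L3: "(-1)^n * bernoulli n = bernoulli n + (if n = 1 then 1 else 0)"
proof -
  have h0: "hh $ 0 = 0" by (simp add: hh_def)
  define c where "c = bf oo hh"
  have Eh: "E oo hh = fps_exp (-1)" unfolding hh_def fps_compose_linear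
    by (simp add: fps_eq_iff power_divide)
  have "(bf * (E - 1)) oo hh = c * ((E oo hh) - 1)"
    by (simp only: fps_compose_mult_distrib[OF h0] fps_compose_sub_distrib fps_compose_1 c_def)
  moreover have "(bf * (E - 1)) oo hh = - fps_X"
    by (simp only: L1 fps_X_fps_compose_startby0[OF h0]) (simp add: hh_def fps_eq_iff)
  ultimately have "c * (fps_exp (-1) - 1) = - fps_X" by (simp add: Eh)
  hence "c * (fps_exp (-1) - 1) * E = - fps_X * E" by simp
  moreover have "fps_exp (-1) * E = (1::rat fps)"
    using fps_exp_add_mult[of "-1::rat" 1] by simp
  ultimately have "c * (1 - E) = - fps_X * E" by (simp add: algebra_simps)
  hence "c * (E - 1) = fps_X * E" by (simp add: algebra_simps)
  hence "(c - bf - fps_X) * (E - 1) = 0" using L1 by (simp add: algebra_simps)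
  hence "c - bf - fps_X = 0" using Em1_nz by simp
  hence "c = bf + fps_X" by (simp add: algebra_simps)
  hence "c $ n = (bf + fps_X) $ n" by simp
  moreover have "c $ n = (-1)^n * bf $ n" unfolding c_def hh_def fps_compose_linear by simp
  ultimately have "(-1)^n * bf $ n = bf $ n + (if n = 1 then 1 else 0)" by (simp add: fps_X_def)
  hence "fact n * ((-1)^n * bf $ n) = fact n * (bf $ n + (if n = 1 then 1 else 0))" by simp
  thus ?thesis by (simp add: bf_nth algebra_simps)
qed

lemma pascal_sum:
  fixes g :: "nat \<Rightarrow> rat"
  shows "(\<Sum>k=0..Suc m. of_nat (Suc m choose k) * g k)
       = (\<Sum>k=0..m. of_nat (m choose k) * g k) + (\<Sum>k=0..m. of_nat (m choose k) * g (Suc k))"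
proof -
  have 1: "(\<Sum>k=0..Suc m. of_nat (Suc m choose k) * g k)
      = g 0 + (\<Sum>k=0..m. of_nat (Suc m choose Suc k) * g (Suc k))"
    by (subst sum.atLeast0_atMost_Suc_shift) simp
  have 2: "(\<Sum>k=0..m. of_nat (Suc m choose Suc k) * g (Suc k)) = (\<Sum>k=0..m. of_nat (m choose k) * g (Suc k))
                    + (\<Sum>k=0..m. of_nat (m choose Suc k) * g (Suc k))"
    by (simp add: sum.distrib algebra_simps)
  have 3: "g 0 + (\<Sum>k=0..m. of_nat (m choose Suc k) * g (Suc k)) = (\<Sum>k=0..Suc m. of_nat (m choose k) * g k)"
    by (subst sum.atLeast0_atMost_Suc_shift) simp
  have 4: "(\<Sum>k=0..Suc m. of_nat (m choose k) * g k) = (\<Sum>k=0..m. of_nat (m choose k) * g k)"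
    by simp
  show ?thesis using 1 2 3 4 by simp
qed

lemma vander:
  fixes f :: "nat \<Rightarrow> rat"
  shows "(\<Sum>i=0..n. of_nat (n choose i) * (\<Sum>k=0..m. of_nat (m choose k) * f (i + k)))
       = (\<Sum>s=0..n+m. of_nat ((n + m) choose s) * f s)"
proof (induction m arbitrary: f)
  case 0
  then show ?case by simp
next
  case (Suc m)
  have "(\<Sum>i=0..n. of_nat (n choose i) * (\<Sum>k=0..Suc m. of_nat (Suc m choose k) * f (i + k)))
     = (\<Sum>i=0..n. of_nat (n choose i) * (\<Sum>k=0..m. of_nat (m choose k) * f (i + k)))
     + (\<Sum>i=0..n. of_nat (n choose i) * (\<Sum>k=0..m. of_nat (m choose k) * (\<lambda>j. f (Suc j)) (i + k)))"
    unfolding distrib_left sum.distrib[symmetric]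
  proof (intro sum.cong refl)
    fix i show "of_nat (n choose i) * (\<Sum>k = 0..Suc m. of_nat (Suc m choose k) * f (i + k)) =
      of_nat (n choose i) * (\<Sum>k = 0..m. of_nat (m choose k) * f (i + k)) +
      of_nat (n choose i) * (\<Sum>k = 0..m. of_nat (m choose k) * (\<lambda>j. f (Suc j)) (i + k))"
      by (simp only: pascal_sum[of m "\<lambda>k. f (i+k)"] distrib_left add_Suc_right)
  qed
  also have "\<dots> = (\<Sum>s=0..n+m. of_nat ((n + m) choose s) * f s)
                  + (\<Sum>s=0..n+m. of_nat ((n + m) choose s) * f (Suc s))"
    using Suc.IH[of f] Suc.IH[of "\<lambda>j. f (Suc j)"] by simp
  also have "\<dots> = (\<Sum>s=0..Suc (n+m). of_nat (Suc (n + m) choose s) * f s)"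
    by (simp only: pascal_sum[of "n+m" f])
  finally show ?case by simp
qed

definition A2 :: "(nat \<Rightarrow> rat) \<Rightarrow> rat fps fps" where
  "A2 u = Abs_fps (\<lambda>n. fps_const (u n / fact n))"
definition C2 :: "(nat \<Rightarrow> rat) \<Rightarrow> rat fps fps" where
  "C2 v = fps_const (Abs_fps (\<lambda>m. v m / fact m))"
definition D2 :: "(nat \<Rightarrow> rat) \<Rightarrow> rat fps fps" where
  "D2 w = Abs_fps (\<lambda>n. Abs_fps (\<lambda>m. w (n + m) / (fact n * fact m)))"

lemma ext1: "(A2 u * (C2 v * D2 w)) $ p1 $ p2 =
  (\<Sum>a=0..p1. \<Sum>c=0..p2. u a / fact a * (v c / fact c * (w ((p1 - a) + (p2 - c)) / (fact (p1 - a) * fact (p2 - c)))))"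
proof -
  have "(A2 u * (C2 v * D2 w)) $ p1 = (\<Sum>a=0..p1. fps_const (u a / fact a) *
     (Abs_fps (\<lambda>m. v m / fact m) * Abs_fps (\<lambda>m. w ((p1 - a) + m) / (fact (p1 - a) * fact m))))"
    unfolding fps_mult_nth[of "A2 u"]
    by (intro sum.cong refl) (simp add: A2_def C2_def D2_def)
  note eq = this
  show ?thesis
    unfolding eq fps_sum_nth fps_mult_left_const_nth fps_mult_nth[of "Abs_fps _"]
    by (simp add: sum_distrib_left ac_simps)
qed

lemma ext2: "(A2 u * (C2 v * D2 w)) $ p1 $ p2 * (fact p1 * fact p2) =
  (\<Sum>j1=0..p1. \<Sum>j2=0..p2. of_nat (p1 choose j1) * of_nat (p2 choose j2) * u (p1 - j1) * v (p2 - j2) * w (j1 + j2))"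
proof -
  have "(A2 u * (C2 v * D2 w)) $ p1 $ p2 * (fact p1 * fact p2) =
    (\<Sum>a=0..p1. \<Sum>c=0..p2. of_nat (p1 choose a) * of_nat (p2 choose c) * u a * v c * w ((p1 - a) + (p2 - c)))"
    unfolding ext1 sum_distrib_right
  proof (intro sum.cong refl)
    fix a c assume a: "a \<in> {0..p1}" and c: "c \<in> {0..p2}"
    show "u a / fact a * (v c / fact c * (w (p1 - a + (p2 - c)) / (fact (p1 - a) * fact (p2 - c)))) * (fact p1 * fact p2) =
         of_nat (p1 choose a) * of_nat (p2 choose c) * u a * v c * w (p1 - a + (p2 - c))"
      using a c by (simp add: binomial_fact field_simps)
  qed
  also have "\<dots> = (\<Sum>j1=0..p1. \<Sum>c=0..p2. of_nat (p1 choose j1) * of_nat (p2 choose c) * u (p1 - j1) * v c * w (j1 + (p2 - c)))"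
    apply (subst sum.atLeastAtMost_rev[of _ 0 p1])
    apply (intro sum.cong refl)
    apply (auto simp: binomial_symmetric[symmetric])
    done
  also have "\<dots> = (\<Sum>j1=0..p1. \<Sum>j2=0..p2. of_nat (p1 choose j1) * of_nat (p2 choose j2) * u (p1 - j1) * v (p2 - j2) * w (j1 + j2))"
    apply (rule sum.cong[OF refl])
    apply (subst sum.atLeastAtMost_rev[of _ 0 p2])
    apply (intro sum.cong refl)
    apply (auto simp: binomial_symmetric[symmetric])
    done
  finally show ?thesis .
qed

lemma fps_const_sum': "fps_const (sum f S) = (\<Sum>x\<in>S. fps_const (f x) :: 'a::comm_ring_1 fps)"
  by (induct S rule: infinite_finite_induct) (auto simp flip: fps_const_add)

definition io :: "rat fps \<Rightarrow> rat fps fps" where "io f = Abs_fps (\<lambda>n. fps_const (f $ n))"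

lemma io_mult: "io (f * g) = io f * io g"
  by (simp add: io_def fps_eq_iff fps_mult_nth fps_const_sum')

lemma io_diff: "io (f - g) = io f - io g"
  by (simp add: io_def fps_eq_iff)

lemma io_1: "io 1 = 1"
  by (simp add: io_def fps_eq_iff)

lemma io_X: "io fps_X = fps_X"
  by (simp add: io_def fps_eq_iff fps_X_def)

lemma XY_nth: "(fps_X + fps_const fps_X :: rat fps fps) $ n $ m = (if n + m = 1 then 1 else 0)"
  by (cases n; cases m) (auto simp: fps_X_def)

lemma main_eq: "A2 bernoulli * (C2 bernoulli * D2 (\<lambda>n. (-1)^n * bernoulli n))
   = A2 (\<lambda>n. (-1)^n * bernoulli n) * (C2 (\<lambda>n. (-1)^n * bernoulli n) * D2 bernoulli)"
proof -
  define XX :: "rat fps fps" where "XX = fps_X"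
  define YY :: "rat fps fps" where "YY = fps_const fps_X"
  define Bx where "Bx = A2 bernoulli"
  define By where "By = C2 bernoulli"
  define Bs where "Bs = D2 bernoulli"
  define Gx where "Gx = A2 (\<lambda>n. (-1)^n * bernoulli n)"
  define Gy where "Gy = C2 (\<lambda>n. (-1)^n * bernoulli n)"
  define Gs where "Gs = D2 (\<lambda>n. (-1)^n * bernoulli n)"
  define Ex where "Ex = A2 (\<lambda>_. 1)"
  define Ey where "Ey = C2 (\<lambda>_. 1)"
  have Bx_io: "Bx = io bf" by (simp add: Bx_def A2_def io_def bf_nth)
  have Ex_io: "Ex = io E" by (simp add: Ex_def A2_def io_def)
  have By_c: "By = fps_const bf" by (simp add: By_def C2_def fps_eq_iff bf_nth)
  have Ey_c: "Ey = fps_const E" by (simp add: Ey_def C2_def fps_eq_iff)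
  have h1: "Bx * (Ex - 1) = XX"
    unfolding Bx_io Ex_io XX_def io_1[symmetric] io_diff[symmetric] io_mult[symmetric] L1 io_X ..
  have Ey1: "Ey - 1 = fps_const (E - 1)" by (simp add: Ey_c fps_eq_iff)
  have h2: "By * (Ey - 1) = YY"
    unfolding By_c Ey1 YY_def by (simp add: L1)
  have h3: "Bs * (Ex * Ey - 1) = XX + YY"
  proof (rule fps_ext, rule fps_ext)
    fix n m
    have c1: "Bs * (Ex * Ey) = A2 (\<lambda>_. 1) * (C2 (\<lambda>_. 1) * D2 bernoulli)"
      by (simp add: Bs_def Ex_def Ey_def ac_simps)
    have "(Bs * (Ex * Ey)) $ n $ m * (fact n * fact m) = (\<Sum>s=0..n+m. of_nat ((n + m) choose s) * bernoulli s)"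
      unfolding c1 ext2 vander[symmetric] sum_distrib_left
      by (intro sum.cong refl) (simp add: ac_simps)
    hence "(Bs * (Ex * Ey)) $ n $ m * (fact n * fact m) - bernoulli (n + m) = (if n + m = 1 then 1 else 0)"
      using L2[of "n+m"] by simp
    moreover have "Bs $ n $ m * (fact n * fact m) = bernoulli (n + m)"
      by (simp add: Bs_def D2_def)
    ultimately have "((Bs * (Ex * Ey)) $ n $ m - Bs $ n $ m) * (fact n * fact m) = (if n + m = 1 then 1 else 0)"
      by (simp add: algebra_simps)
    moreover have "(if n + m = 1 then 1 else 0) = (if n + m = 1 then 1 else (0::rat)) * (fact n * fact m)"
      by (cases n; cases m) auto
    ultimately have "((Bs * (Ex * Ey)) $ n $ m - Bs $ n $ m) * (fact n * fact m) = (if n + m = 1 then 1 else 0) * (fact n * fact m)"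
      by simp
    moreover have "(fact n * fact m :: rat) \<noteq> 0" by simp
    ultimately have "(Bs * (Ex * Ey)) $ n $ m - Bs $ n $ m = (if n + m = 1 then 1 else 0)"
      using mult_right_cancel by blast
    thus "(Bs * (Ex * Ey - 1)) $ n $ m = (XX + YY) $ n $ m"
      unfolding XX_def YY_def XY_nth by (simp add: algebra_simps)
  qed
  have g1: "Gx = Bx + XX"
    by (simp add: Gx_def Bx_def A2_def XX_def fps_eq_iff L3 add_divide_distrib fps_X_def)
  have g2: "Gy = By + YY"
    by (simp add: Gy_def By_def C2_def YY_def fps_eq_iff L3 add_divide_distrib fps_X_def)
  have g3: "Gs = Bs + (XX + YY)"
  proof (rule fps_ext, rule fps_ext)
    fix n m
    show "Gs $ n $ m = (Bs + (XX + YY)) $ n $ m"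
      unfolding fps_add_nth[of Bs] XX_def YY_def XY_nth
      by (cases n; cases m) (auto simp: Gs_def Bs_def D2_def L3 add_divide_distrib)
  qed
  have e3: "Ex * Ey - 1 = (Ex - 1 + 1) * (Ey - 1 + 1) - 1" by simp
  have nz1: "Ex - 1 \<noteq> 0"
  proof
    assume "Ex - 1 = 0" hence "(Ex - 1) $ 1 = 0" by simp
    thus False by (simp add: Ex_def A2_def)
  qed
  have nz2: "Ey - 1 \<noteq> 0"
    using Em1_nz unfolding Ey1 by simp
  have nz3: "Ex * Ey - 1 \<noteq> 0"
  proof
    assume "Ex * Ey - 1 = 0" hence "(Ex * Ey - 1) $ 1 $ 0 = 0" by simp
    thus False by (simp add: Ex_def A2_def Ey_c)
  qed
  have "(Bx * By * Gs) * ((Ex - 1) * (Ey - 1) * (Ex * Ey - 1)) = (Gx * Gy * Bs) * ((Ex - 1) * (Ey - 1) * (Ex * Ey - 1))"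
  proof -
    have "(Bx * By * Gs) * ((Ex - 1) * (Ey - 1) * (Ex * Ey - 1))
        = (Bx * (Ex - 1)) * (By * (Ey - 1)) * (Bs * (Ex * Ey - 1) + (XX + YY) * (Ex * Ey - 1))"
      unfolding g3 by (simp add: algebra_simps)
    also have "\<dots> = XX * YY * (XX + YY) * (Ex * Ey)"
      unfolding h1 h2 h3 by (simp add: algebra_simps)
    also have "\<dots> = (Bx * (Ex - 1) + XX * (Ex - 1)) * (By * (Ey - 1) + YY * (Ey - 1)) * (Bs * (Ex * Ey - 1))"
      unfolding h1 h2 h3 by (simp add: algebra_simps)
    also have "\<dots> = (Gx * Gy * Bs) * ((Ex - 1) * (Ey - 1) * (Ex * Ey - 1))"
      unfolding g1 g2 by (simp add: algebra_simps)
    finally show ?thesis .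
  qed
  hence "Bx * By * Gs = Gx * Gy * Bs" using nz1 nz2 nz3 by simp
  thus ?thesis by (simp add: Bx_def By_def Gs_def Gx_def Gy_def Bs_def mult.assoc)
qed

theorem mainTheorem11:
  fixes p1 p2 :: nat
  assumes "odd (p1 + p2)"
  shows "(\<Sum>j1=0..p1. \<Sum>j2=0..p2.
            of_nat (p1 choose j1) * of_nat (p2 choose j2) * (-1) ^ (j1 + j2)
            * bernoulli (p1 - j1) * bernoulli (p2 - j2) * bernoulli (j1 + j2)) = (0::rat)"
proof -
  let ?S = "(\<Sum>j1=0..p1. \<Sum>j2=0..p2.
            of_nat (p1 choose j1) * of_nat (p2 choose j2) * (-1) ^ (j1 + j2)
            * bernoulli (p1 - j1) * bernoulli (p2 - j2) * bernoulli (j1 + j2)) :: rat"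
  have 1: "(A2 bernoulli * (C2 bernoulli * D2 (\<lambda>n. (-1)^n * bernoulli n))) $ p1 $ p2 * (fact p1 * fact p2) = ?S"
    unfolding ext2 by (intro sum.cong refl) (simp add: ac_simps)
  have 2: "(A2 (\<lambda>n. (-1)^n * bernoulli n) * (C2 (\<lambda>n. (-1)^n * bernoulli n) * D2 bernoulli)) $ p1 $ p2
      * (fact p1 * fact p2) = - ?S"
    unfolding ext2 sum_negf[symmetric]
  proof (intro sum.cong refl)
    fix j1 j2 assume j: "j1 \<in> {0..p1}" "j2 \<in> {0..p2}"
    have "(-1::rat)^(p1 - j1) * (-1)^(p2 - j2) = - ((-1)^(j1 + j2))"
    proof -
      have "(-1::rat)^(p1 - j1) * (-1)^(p2 - j2) * (-1)^(j1 + j2) = (-1)^(p1 + p2)"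
        using j by (simp flip: power_add)
      also have "\<dots> = -1" using assms by simp
      finally have "(-1::rat)^(p1 - j1) * (-1)^(p2 - j2) * (-1)^(j1 + j2) * (-1)^(j1 + j2) = - ((-1)^(j1 + j2))"
        by simp
      moreover have "(-1::rat)^(j1 + j2) * (-1)^(j1 + j2) = 1"
        by (simp flip: power_add)
      ultimately show ?thesis by (simp add: mult.assoc)
    qed
    thus "of_nat (p1 choose j1) * of_nat (p2 choose j2) * ((- 1) ^ (p1 - j1) * bernoulli (p1 - j1)) *
         ((- 1) ^ (p2 - j2) * bernoulli (p2 - j2)) * bernoulli (j1 + j2) =
         - (of_nat (p1 choose j1) * of_nat (p2 choose j2) * (- 1) ^ (j1 + j2) * bernoulli (p1 - j1) *
            bernoulli (p2 - j2) * bernoulli (j1 + j2))"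
      by (smt (verit) mult.assoc mult.left_commute mult_minus_left)
  qed
  have "?S = - ?S" using 1 2 main_eq by simp
  thus ?thesis by simp
qed

end
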